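(* For every density operator $\rho$ on $\mathbb{C}^d$, $C_{\mathcal{F}}(\rho)\le\frac1d 2^{\mu_d(\rho)}$, where $\mu_d(\rho)=D_{\max}(\rho\,\|\,\Delta(\rho))$.
   Context: Fix the computational basis $\{|i\rangle\}_{i=0}^{d-1}$ of $\mathbb{C}^d$ as the incoherent basis and $\Delta(\rho)=\sum_i|i\rangle\langle i|\rho|i\rangle\langle i|$. A maximally coherent state is a pure state $\frac1{\sqrt d}\sum_{i}e^{\mathrm{i}\theta_i}|i\rangle$; the quantum coherence fraction is $C_{\mathcal{F}}(\rho)=\max_{|\phi\rangle\text{ maximally coherent}}\langle\phi|\rho|\phi\rangle$. The max-relative entropy is $D_{\max}(\rho\|\sigma)=\min\{\gamma\in\mathbb{R}:\rho\le 2^{\gamma}\sigma\}$ (logarithm base 2), so $\mu_d(\rho)=\min\{\gamma:\rho\le2^\gamma\Delta(\rho)\}$. *)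

theory Defs
  imports "HOL-Analysis.Analysis"
begin

text \<open>Operators on C^d are d x d complex matrices indexed by a finite type 'n, d = CARD('n).
  The computational basis is the standard basis.\<close>

definition qform :: "complex^'n^'n \<Rightarrow> complex^'n \<Rightarrow> complex" where
  "qform A v = (\<Sum>i\<in>UNIV. \<Sum>j\<in>UNIV. cnj (v $ i) * A $ i $ j * v $ j)"

definition psd :: "complex^'n^'n \<Rightarrow> bool" where
  "psd A \<longleftrightarrow> (\<forall>v. qform A v \<in> \<real> \<and> 0 \<le> Re (qform A v))"

definition loewner_le :: "complex^'n^'n \<Rightarrow> complex^'n^'n \<Rightarrow> bool" where
  "loewner_le A B \<longleftrightarrow> psd (B - A)"

definition density :: "complex^'n^'n \<Rightarrow> bool" where
  "density \<rho> \<longleftrightarrow> psd \<rho> \<and> trace \<rho> = 1"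

definition dephase :: "complex^'n^'n \<Rightarrow> complex^'n^'n" where
  "dephase \<rho> = (\<chi> i j. if i = j then \<rho> $ i $ j else 0)"

definition D_max :: "complex^'n^'n \<Rightarrow> complex^'n^'n \<Rightarrow> real" where
  "D_max \<rho> \<sigma> = Inf {\<gamma>::real. loewner_le \<rho> ((2 powr \<gamma>) *\<^sub>R \<sigma>)}"

definition mu_d :: "complex^'n^'n \<Rightarrow> real" where
  "mu_d \<rho> = D_max \<rho> (dephase \<rho>)"

definition max_coh :: "('n::finite \<Rightarrow> real) \<Rightarrow> complex^'n" where
  "max_coh \<theta> = (\<chi> i. exp (\<i> * complex_of_real (\<theta> i)) / complex_of_real (sqrt (real CARD('n))))"

text \<open>Coherence fraction: maximum of <phi|rho|phi> over maximally coherent phi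
  (these values are real for a density operator).\<close>
definition coh_fraction :: "complex^'n::finite^'n \<Rightarrow> real" where
  "coh_fraction \<rho> = Sup {Re (qform \<rho> (max_coh \<theta>)) | \<theta>. True}"

end

theory Submission
  imports Defs
begin

lemma qform_alt: "qform A v = (\<Sum>i\<in>UNIV. cnj (v $ i) * (\<Sum>j\<in>UNIV. A $ i $ j * v $ j))"
  unfolding qform_def by (simp add: sum_distrib_left mult.assoc)

lemma qform_diff: "qform (A - B) v = qform A v - qform B v"
  unfolding qform_def by (simp add: sum_subtractf algebra_simps)

lemma sum_if_mult: "(\<Sum>l\<in>(UNIV::'n::finite set). f l * (if l = i then a else 0)) = f i * (a::complex)"
proof -
  have h: "(\<lambda>l. f l*(if l=i then a else 0)) = (\<lambda>l. if l = i then f l * a else 0)" by auto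
  show ?thesis unfolding h by simp
qed

lemma sum_if_mult2: "(\<Sum>l\<in>(UNIV::'n::finite set). (if l = i then a else 0) * f l) = (a::complex) * f i"
  using sum_if_mult[of f i a] by (simp add: mult.commute)

lemma qform_scaleR: "qform (c *\<^sub>R A) v = of_real c * qform A v"
  unfolding qform_def by (simp only: vector_scaleR_component) (simp add: sum_distrib_left scaleR_conv_of_real algebra_simps)

lemma qform_dephase: "qform (dephase A) v = (\<Sum>i\<in>UNIV. cnj (v $ i) * A $ i $ i * v $ i)"
proof -
  have "\<And>i. (\<Sum>j\<in>UNIV. cnj (v $ i) * dephase A $ i $ j * v $ j) = cnj (v $ i) * A $ i $ i * v $ i"
  proof -
    fix i
    have h: "(\<lambda>j. cnj (v $ i) * dephase A $ i $ j * v $ j) = (\<lambda>j. (cnj (v $ i) * A $ i $ j * v $ j) * (if j = i then 1 else 0))"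
      unfolding dephase_def by auto
    show "(\<Sum>j\<in>UNIV. cnj (v $ i) * dephase A $ i $ j * v $ j) = cnj (v $ i) * A $ i $ i * v $ i"
      unfolding h sum_if_mult by simp
  qed
  then show ?thesis unfolding qform_def by simp
qed

lemma qform_two:
  assumes "i \<noteq> j"
  shows "qform A (\<chi> k. if k = i then a else if k = j then b else 0)
    = cnj a * A$i$i * a + cnj a * A$i$j * b + cnj b * A$j$i * a + cnj b * A$j$j * b"
proof -
  have e: "\<And>k. (\<chi> k. if k = i then a else if k = j then b else 0) $ k = (if k = i then a else 0) + (if k = j then b else 0)"
    using assms by auto
  have ec: "\<And>k. cnj ((\<chi> k. if k = i then a else if k = j then b else 0) $ k) = (if k = i then cnj a else 0) + (if k = j then cnj b else 0)"
    using assms by auto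
  have in1: "\<And>k. (\<Sum>l\<in>UNIV. A $ k $ l * (\<chi> k. if k = i then a else if k = j then b else 0) $ l) = A$k$i * a + A$k$j*b"
    unfolding e distrib_left sum.distrib sum_if_mult by simp
  show ?thesis unfolding qform_alt in1 unfolding ec distrib_right sum.distrib sum_if_mult2
    by (simp add: algebra_simps)
qed

lemma trace_alt: "trace A = (\<Sum>i\<in>UNIV. A$i$i)" by (simp add: trace_def)

lemma cnj_mult_self: "cnj a * x * a = x * of_real ((cmod a)^2)"
proof -
  have "cnj a * x * a = x * (a * cnj a)" by (simp add: algebra_simps)
  also have "a * cnj a = of_real ((cmod a)^2)" by (rule complex_norm_square[symmetric])
  finally show ?thesis .
qed

lemma Re_cnj_mult_self: "Re (cnj a * x * a) = (cmod a)^2 * Re x"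
  unfolding cnj_mult_self by (simp del: of_real_power add: mult.commute)

lemma cnj_if: "cnj (if P then a else 0) = (if P then cnj a else 0)" by simp

lemma qform_one:
  "qform A (\<chi> k. if k = i then a else 0) = cnj a * A$i$i * a"
proof -
  have e: "\<And>k. (\<chi> k. if k = i then a else 0) $ k = (if k = i then a else 0)" by simp
  have ec: "\<And>k. cnj ((\<chi> k. if k = i then a else 0) $ k) = (if k = i then cnj a else 0)" by simp
  show ?thesis unfolding qform_alt e sum_if_mult unfolding cnj_if sum_if_mult2 by (simp add: algebra_simps)
qed

lemma psd_diag:
  assumes "psd A"
  shows "A$i$i \<in> \<real>" "0 \<le> Re (A$i$i)"
  using assms qform_one[of A i 1] unfolding psd_def by (metis mult_1 mult_1_right complex_cnj_one)+

lemma psd_pair: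
  assumes "psd A"
  shows "Re (cnj (v$i) * A$i$j * v$j) + Re (cnj (v$j) * A$j$i * v$i)
     \<le> (cmod (v$i))^2 * Re (A$i$i) + (cmod (v$j))^2 * Re (A$j$j)"
proof (cases "i = j")
  case True
  then show ?thesis by (simp add: cnj_mult_self)
next
  case False
  have "0 \<le> Re (qform A (\<chi> k. if k = i then v$i else if k = j then - v$j else 0))"
    using assms unfolding psd_def by blast
  also have "\<dots> = (cmod (v$i))^2 * Re (A$i$i) + (cmod (v$j))^2 * Re (A$j$j)
     - (Re (cnj (v$i) * A$i$j * v$j) + Re (cnj (v$j) * A$j$i * v$i))"
  proof -
    have "qform A (\<chi> k. if k = i then v$i else if k = j then - v$j else 0)
      = cnj (v$i) * A$i$i * v$i + cnj (v$j) * A$j$j * v$j - (cnj (v$i) * A$i$j * v$j + cnj (v$j) * A$j$i * v$i)"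
      unfolding qform_two[OF False] by (simp add: algebra_simps)
    then show ?thesis by (simp only: minus_complex.sel plus_complex.sel Re_cnj_mult_self)
  qed
  finally show ?thesis by simp
qed

lemma psd_bound:
  fixes A :: "complex^'n::finite^'n"
  assumes "psd A"
  shows "Re (qform A v) \<le> real CARD('n) * (\<Sum>i\<in>UNIV. (cmod (v$i))^2 * Re (A$i$i))"
proof -
  define D where "D i = (cmod (v$i))^2 * Re (A$i$i)" for i
  define T where "T i j = Re (cnj (v$i) * A$i$j * v$j)" for i j
  have "Re (qform A v) = (\<Sum>i\<in>UNIV. \<Sum>j\<in>UNIV. T i j)"
    unfolding qform_def T_def by (simp add: Re_sum)
  also have "\<dots> = (1/2) * ((\<Sum>i\<in>UNIV. \<Sum>j\<in>UNIV. T i j) + (\<Sum>i\<in>UNIV. \<Sum>j\<in>UNIV. T j i))"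
    using sum.swap[of T UNIV UNIV] by simp
  also have "\<dots> = (1/2) * (\<Sum>i\<in>UNIV. \<Sum>j\<in>UNIV. T i j + T j i)"
    by (simp add: sum.distrib)
  also have "\<dots> \<le> (1/2) * (\<Sum>i\<in>UNIV. \<Sum>j\<in>UNIV. D i + D j)"
    using psd_pair[OF assms, of v] unfolding T_def D_def
    by (intro mult_left_mono sum_mono) auto
  also have "\<dots> = real CARD('n) * (\<Sum>i\<in>UNIV. D i)"
    by (simp add: sum.distrib sum.swap[of "\<lambda>i j. D j"] sum_distrib_left)
  finally show ?thesis unfolding D_def .
qed

lemma qform_dephase_real:
  fixes A :: "complex^'n::finite^'n"
  assumes "psd A"
  shows "qform (dephase A) v = of_real (\<Sum>i\<in>UNIV. (cmod (v$i))^2 * Re (A$i$i))"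
proof -
  have "\<And>i. cnj (v $ i) * A $ i $ i * v $ i = of_real ((cmod (v$i))^2 * Re (A$i$i))"
  proof -
    fix i
    have "A$i$i = of_real (Re (A$i$i))" using psd_diag(1)[OF assms, of i] by (simp add: complex_is_Real_iff)
    then show "cnj (v $ i) * A $ i $ i * v $ i = of_real ((cmod (v$i))^2 * Re (A$i$i))"
      unfolding cnj_mult_self by (metis mult.commute of_real_mult)
  qed
  then show ?thesis unfolding qform_dephase by simp
qed

lemma admissible_nonempty:
  fixes \<rho> :: "complex^'n::finite^'n"
  assumes "psd \<rho>"
  shows "loewner_le \<rho> ((2 powr (log 2 (real CARD('n)))) *\<^sub>R dephase \<rho>)"
proof -
  have p: "2 powr (log 2 (real CARD('n))) = real CARD('n)" by simp
  show ?thesis unfolding loewner_le_def psd_def p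
  proof
    fix v
    have eq: "qform (real CARD('n) *\<^sub>R dephase \<rho> - \<rho>) v
      = of_real (real CARD('n) * (\<Sum>i\<in>UNIV. (cmod (v$i))^2 * Re (\<rho>$i$i))) - qform \<rho> v"
      unfolding qform_diff qform_scaleR qform_dephase_real[OF assms] by simp
    have r: "qform \<rho> v \<in> \<real>" using assms unfolding psd_def by blast
    show "qform (real CARD('n) *\<^sub>R dephase \<rho> - \<rho>) v \<in> \<real> \<and>
          0 \<le> Re (qform (real CARD('n) *\<^sub>R dephase \<rho> - \<rho>) v)"
      unfolding eq using r psd_bound[OF assms, of v] by simp
  qed
qed

lemma max_coh_norm:
  fixes \<theta> :: "'n::finite \<Rightarrow> real"
  shows "(cmod (max_coh \<theta> $ i))^2 = 1 / real CARD('n)"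
  unfolding max_coh_def by (simp add: norm_divide power_divide)

theorem mainTheorem6:
  fixes \<rho> :: "complex^'n::finite^'n"
  assumes "density \<rho>"
  shows "coh_fraction \<rho> \<le> (1 / real CARD('n)) * 2 powr (mu_d \<rho>)"
proof -
  have psd: "psd \<rho>" and tr: "trace \<rho> = 1" using assms unfolding density_def by auto
  define S where "S = {\<gamma>::real. loewner_le \<rho> ((2 powr \<gamma>) *\<^sub>R dephase \<rho>)}"
  have Sne: "S \<noteq> {}" using admissible_nonempty[OF psd] unfolding S_def by blast
  have mu: "mu_d \<rho> = Inf S" unfolding mu_d_def D_max_def S_def by simp
  have dpos: "real CARD('n) > 0" by simp
  have sumdiag: "(\<Sum>i\<in>UNIV. Re (\<rho>$i$i)) = 1" using tr unfolding trace_alt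
    by (metis Re_sum one_complex.sel)
  have bound: "Re (qform \<rho> (max_coh \<theta>)) \<le> (1 / real CARD('n)) * 2 powr (mu_d \<rho>)" for \<theta>
  proof -
    define q where "q = Re (qform \<rho> (max_coh \<theta>))"
    have qd: "qform (dephase \<rho>) (max_coh \<theta>) = of_real (1 / real CARD('n))"
    proof -
      have "(\<Sum>i\<in>UNIV. (cmod (max_coh \<theta> $ i))^2 * Re (\<rho>$i$i)) = 1 / real CARD('n)"
        by (simp only: max_coh_norm sum_distrib_left[symmetric] sumdiag)
      then show ?thesis unfolding qform_dephase_real[OF psd] by simp
    qed
    have adm: "real CARD('n) * q \<le> 2 powr \<gamma>" if "\<gamma> \<in> S" for \<gamma>
    proof -
      have "0 \<le> Re (qform ((2 powr \<gamma>) *\<^sub>R dephase \<rho> - \<rho>) (max_coh \<theta>))"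
        using that unfolding S_def loewner_le_def psd_def by blast
      also have "\<dots> = 2 powr \<gamma> / real CARD('n) - q"
        unfolding qform_diff qform_scaleR qd q_def by simp
      finally show ?thesis using dpos by (simp add: field_simps)
    qed
    show ?thesis
    proof (cases "q > 0")
      case False
      have "0 \<le> (1 / real CARD('n)) * 2 powr (mu_d \<rho>)" by simp
      then show ?thesis unfolding q_def[symmetric] using False by linarith
    next
      case True
      have "log 2 (real CARD('n) * q) \<le> Inf S"
      proof (rule cInf_greatest[OF Sne])
        fix \<gamma> assume "\<gamma> \<in> S"
        then have "real CARD('n) * q \<le> 2 powr \<gamma>" by (rule adm)
        then show "log 2 (real CARD('n) * q) \<le> \<gamma>"
          using True dpos by (simp add: log_le_iff)
      qed
      then have "2 powr (log 2 (real CARD('n) * q)) \<le> 2 powr (mu_d \<rho>)"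
        unfolding mu by simp
      then have "real CARD('n) * q \<le> 2 powr (mu_d \<rho>)" using True dpos by simp
      then show ?thesis unfolding q_def[symmetric] using dpos by (simp add: field_simps)
    qed
  qed
  show ?thesis unfolding coh_fraction_def
    by (rule cSup_least) (use bound in auto)
qed
end
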